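(* Let $\bar x=1/x$ and let $Y=Y(t;x)$ be the unique formal power series in $t$ (with coefficients in $\mathbb{Q}[x,\bar x]$) satisfying $$Y=t(1+\bar x)(1+Y)(x+Y).$$ Let $$R(x,Y)=Y(x+1-\bar x^{5}-\bar x^{6})+Y^2(\bar x^{5}-\bar x)+Y^3(\bar x^{3}+\bar x^{6}-\bar x-\bar x^{4})+Y^4(\bar x^{3}-\bar x^{5}).$$ Then the series $E(u,v)$ defined below satisfies $$E(1+x,1+x)=\mathop{\mathrm{PT}}_{x}R(x,Y),$$ where $\mathop{\mathrm{PT}}_x$ extracts the non-negative powers of $x$ in a series of $\mathbb{Q}[x,\bar x][[t]]$.
   Context: $\mathbf{I}_n(\geq,\geq,-)$ is the set of inversion sequences $e=(e_1,\ldots,e_n)$ ($0\leq e_i<i$) with no $i<j<k$ such that $e_i\geq e_j\geq e_k$. An entry $e_i$ is a left-to-right maximum if $e_i>e_j$ for all $j<i$. Let $\alpha(e)=\max_i e_i$ and $\beta(e)$ the largest element of $\{e_i: e_i\text{ not a left-to-right maximum}\}\cup\{-1\}$; the parameters of $e$ are $(p,q)=(\alpha(e)-\beta(e),\,n-\alpha(e))$. Define $E(u,v)=\sum_{n\geq1}\sum_{e\in\mathbf{I}_n(\geq,\geq,-)}u^{p(e)}v^{q(e)}t^n$, where $(p(e),q(e))$ are the parameters of $e$; it is the series solution of $\bigl(1+\frac{tv}{1-u}+\frac{tv}{1-v/u}\bigr)E(u,v)=tuv+\frac{tv}{1-u}E(1,v)+\frac{tv}{1-v/u}E(u,u)$.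 *)

theory Defs
  imports "HOL-Computational_Algebra.Formal_Laurent_Series"
begin

text \<open>An inversion sequence e = (e_1,...,e_n) with 0 <= e_i < i is represented by a
  list of length n, 0-indexed: e ! i stands for e_(i+1), so the condition is e ! i <= i.\<close>

definition inv_seq :: "nat \<Rightarrow> nat list set" where
  "inv_seq n = {e. length e = n \<and> (\<forall>i<n. e ! i \<le> i)}"

definition avoids_ge_ge :: "nat list \<Rightarrow> bool" where
  "avoids_ge_ge e \<longleftrightarrow>
     \<not> (\<exists>i j k. i < j \<and> j < k \<and> k < length e \<and> e ! i \<ge> e ! j \<and> e ! j \<ge> e ! k)"

definition I_gge :: "nat \<Rightarrow> nat list set" where
  "I_gge n = {e \<in> inv_seq n. avoids_ge_ge e}"

definition ltr_max :: "nat list \<Rightarrow> nat \<Rightarrow> bool" where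
  "ltr_max e i \<longleftrightarrow> (\<forall>j<i. e ! j < e ! i)"

definition alpha :: "nat list \<Rightarrow> int" where
  "alpha e = int (Max (set e))"

definition beta :: "nat list \<Rightarrow> int" where
  "beta e = Max ({int (e ! i) | i. i < length e \<and> \<not> ltr_max e i} \<union> {-1})"

definition par_p :: "nat list \<Rightarrow> int" where
  "par_p e = alpha e - beta e"

definition par_q :: "nat list \<Rightarrow> int" where
  "par_q e = int (length e) - alpha e"

text \<open>The parameters p, q are non-negative, so nat does not truncate.\<close>
definition E_gf :: "'a::comm_ring_1 \<Rightarrow> 'a \<Rightarrow> 'a fps" where
  "E_gf u v = Abs_fps (\<lambda>n. if n = 0 then 0 else
      (\<Sum>e\<in>I_gge n. u ^ nat (par_p e) * v ^ nat (par_q e)))"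

text \<open>Power series in t whose coefficients are Laurent series in x
  (these contain Q[x, 1/x]). x is fls_X and xbar = 1/x is fls_X_inv.\<close>

type_synonym ser = "rat fls fps"

abbreviation xx :: "rat fls" where "xx \<equiv> fls_X"
abbreviation xb :: "rat fls" where "xb \<equiv> fls_X_inv"

definition Yser :: ser where
  "Yser = (THE Y. Y = fps_X * fps_const (1 + xb) * (1 + Y) * (fps_const xx + Y))"

definition Rser :: "ser \<Rightarrow> ser" where
  "Rser Y = Y * fps_const (xx + 1 - xb ^ 5 - xb ^ 6)
          + Y ^ 2 * fps_const (xb ^ 5 - xb)
          + Y ^ 3 * fps_const (xb ^ 3 + xb ^ 6 - xb - xb ^ 4)
          + Y ^ 4 * fps_const (xb ^ 3 - xb ^ 5)"

definition PT_x :: "ser \<Rightarrow> rat fps fps" where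
  "PT_x F = Abs_fps (\<lambda>n. fls_regpart (F $ n))"

end

theory Submission
  imports Defs
begin

lemma ltr_app: "i < length e \<Longrightarrow> ltr_max (e@[c]) i = ltr_max e i"
  unfolding ltr_max_def by (auto simp: nth_append)

lemma ltr_last: "ltr_max (e@[c]) (length e) \<longleftrightarrow> (\<forall>j<length e. e!j < c)"
  unfolding ltr_max_def by (auto simp: nth_append)

lemma nonltr_ex: "\<not> ltr_max e j \<longleftrightarrow> (\<exists>i<j. e!i \<ge> e!j)"
  unfolding ltr_max_def by auto

lemma avoid_app:
  "avoids_ge_ge (e@[c]) \<longleftrightarrow> avoids_ge_ge e \<and> (\<forall>j<length e. \<not> ltr_max e j \<longrightarrow> e!j < c)"
proof
  assume a: "avoids_ge_ge (e@[c])"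
  have "avoids_ge_ge e"
    unfolding avoids_ge_ge_def
  proof
    assume "\<exists>i j k. i < j \<and> j < k \<and> k < length e \<and> e ! i \<ge> e ! j \<and> e ! j \<ge> e ! k"
    then obtain i j k where h: "i < j" "j < k" "k < length e" "e ! i \<ge> e ! j" "e ! j \<ge> e ! k" by blast
    have n: "(e@[c])!i = e!i" "(e@[c])!j = e!j" "(e@[c])!k = e!k" using h by (simp_all add: nth_append)
    from a have "\<not> (i < j \<and> j < k \<and> k < length (e@[c]) \<and> (e@[c]) ! i \<ge> (e@[c]) ! j \<and> (e@[c]) ! j \<ge> (e@[c]) ! k)"
      unfolding avoids_ge_ge_def by blast
    then show False using h n by simp
  qed
  moreover have "\<forall>j<length e. \<not> ltr_max e j \<longrightarrow> e!j < c"
  proof (intro allI impI)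
    fix j assume j: "j < length e" "\<not> ltr_max e j"
    then obtain i where i: "i < j" "e!i \<ge> e!j" using nonltr_ex by blast
    show "e!j < c"
    proof (rule ccontr)
      assume "\<not> e!j < c"
      then have "(e@[c])!i \<ge> (e@[c])!j \<and> (e@[c])!j \<ge> (e@[c])!(length e)"
        using i j by (auto simp: nth_append)
      moreover from a have "\<not> (i < j \<and> j < length e \<and> length e < length (e@[c]) \<and> (e@[c]) ! i \<ge> (e@[c]) ! j \<and> (e@[c]) ! j \<ge> (e@[c]) ! (length e))"
        unfolding avoids_ge_ge_def by blast
      ultimately show False using i j by simp
    qed
  qed
  ultimately show "avoids_ge_ge e \<and> (\<forall>j<length e. \<not> ltr_max e j \<longrightarrow> e!j < c)" by blast
next
  assume b: "avoids_ge_ge e \<and> (\<forall>j<length e. \<not> ltr_max e j \<longrightarrow> e!j < c)"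
  show "avoids_ge_ge (e@[c])"
    unfolding avoids_ge_ge_def
  proof
    assume "\<exists>i j k. i < j \<and> j < k \<and> k < length (e@[c]) \<and> (e@[c]) ! i \<ge> (e@[c]) ! j \<and> (e@[c]) ! j \<ge> (e@[c]) ! k"
    then obtain i j k where h: "i < j" "j < k" "k < length (e@[c])" "(e@[c]) ! i \<ge> (e@[c]) ! j" "(e@[c]) ! j \<ge> (e@[c]) ! k" by blast
    show False
    proof (cases "k < length e")
      case True
      then have "e ! i \<ge> e ! j" "e ! j \<ge> e ! k" using h by (auto simp: nth_append)
      moreover from b have "\<not> (i < j \<and> j < k \<and> k < length e \<and> e ! i \<ge> e ! j \<and> e ! j \<ge> e ! k)"
        unfolding avoids_ge_ge_def by blast
      ultimately show False using h True by simp
    next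
      case False
      then have k: "k = length e" using h by simp
      then have ij: "e ! i \<ge> e ! j" and jc: "e ! j \<ge> c" using h by (auto simp: nth_append)
      have nl: "\<not> ltr_max e j" using nonltr_ex h(1) ij by blast
      have jl: "j < length e" using h(2) k by simp
      have "e ! j < c" using b jl nl by blast
      then show False using jc by simp
    qed
  qed
qed

definition nonltr :: "nat list \<Rightarrow> int set" where
  "nonltr e = {int (e ! i) | i. i < length e \<and> \<not> ltr_max e i}"

lemma finite_nonltr: "finite (nonltr e)"
  unfolding nonltr_def by simp

lemma beta_nonltr: "beta e = Max (nonltr e \<union> {-1})"
  unfolding beta_def nonltr_def by simp

lemma beta_lt: "beta e < int c \<longleftrightarrow> (\<forall>j<length e. \<not> ltr_max e j \<longrightarrow> e!j < c)"
  unfolding beta_nonltr using finite_nonltr[of e]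
  by (auto simp: nonltr_def)

lemma beta_ge: "beta e \<ge> -1"
  unfolding beta_nonltr using finite_nonltr[of e] by simp

lemma nonltr_app: "nonltr (e@[c]) = nonltr e \<union> (if ltr_max (e@[c]) (length e) then {} else {int c})"
proof (rule set_eqI)
  fix x
  have "x \<in> nonltr (e@[c]) \<longleftrightarrow> (\<exists>i. x = int ((e@[c]) ! i) \<and> (i < length e \<or> i = length e) \<and> \<not> ltr_max (e@[c]) i)"
    unfolding nonltr_def by (auto simp: less_Suc_eq)
  also have "\<dots> \<longleftrightarrow> (\<exists>i. x = int (e ! i) \<and> i < length e \<and> \<not> ltr_max e i) \<or> (x = int c \<and> \<not> ltr_max (e@[c]) (length e))"
  proof -
    have 1: "\<forall>i<length e. (e@[c])!i = e!i \<and> ltr_max (e@[c]) i = ltr_max e i" by (simp add: nth_append ltr_app)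
    have 2: "(e@[c])!length e = c" by simp
    show ?thesis
    proof
      assume "\<exists>i. x = int ((e@[c]) ! i) \<and> (i < length e \<or> i = length e) \<and> \<not> ltr_max (e@[c]) i"
      then obtain i where "x = int ((e@[c]) ! i)" "i < length e \<or> i = length e" "\<not> ltr_max (e@[c]) i" by blast
      then show "(\<exists>i. x = int (e ! i) \<and> i < length e \<and> \<not> ltr_max e i) \<or> (x = int c \<and> \<not> ltr_max (e@[c]) (length e))"
        using 1 2 by metis
    next
      assume "(\<exists>i. x = int (e ! i) \<and> i < length e \<and> \<not> ltr_max e i) \<or> (x = int c \<and> \<not> ltr_max (e@[c]) (length e))"
      then show "\<exists>i. x = int ((e@[c]) ! i) \<and> (i < length e \<or> i = length e) \<and> \<not> ltr_max (e@[c]) i"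
        using 1 2 by metis
    qed
  qed
  finally show "x \<in> nonltr (e@[c]) \<longleftrightarrow> x \<in> nonltr e \<union> (if ltr_max (e@[c]) (length e) then {} else {int c})"
    unfolding nonltr_def by auto
qed

lemma beta_app: "beta (e@[c]) = (if ltr_max (e@[c]) (length e) then beta e else max (beta e) (int c))"
proof (cases "ltr_max (e@[c]) (length e)")
  case True
  then show ?thesis unfolding beta_nonltr nonltr_app by simp
next
  case False
  have "nonltr e \<union> {int c} \<union> {-1} = insert (int c) (nonltr e \<union> {-1})" by auto
  then have "beta (e@[c]) = Max (insert (int c) (nonltr e \<union> {-1}))"
    unfolding beta_nonltr nonltr_app using False by simp
  also have "\<dots> = max (int c) (Max (nonltr e \<union> {-1}))"
    using finite_nonltr[of e] by (simp del: Max_insert add: Max_insert)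
  finally show ?thesis using False unfolding beta_nonltr by (simp add: max.commute)
qed

lemma alpha_app: "e \<noteq> [] \<Longrightarrow> alpha (e@[c]) = max (alpha e) (int c)"
proof -
  assume "e \<noteq> []"
  then have "Max (set (e@[c])) = max c (Max (set e))" by simp
  then show ?thesis unfolding alpha_def by (simp add: of_nat_max max.commute)
qed

lemma ltr_last_alpha: "e \<noteq> [] \<Longrightarrow> ltr_max (e@[c]) (length e) \<longleftrightarrow> alpha e < int c"
proof -
  assume ne: "e \<noteq> []"
  have "(\<forall>j<length e. e!j < c) \<longleftrightarrow> (\<forall>a\<in>set e. a < c)" by (metis in_set_conv_nth)
  also have "\<dots> \<longleftrightarrow> Max (set e) < c" using ne by simp
  finally show ?thesis using ltr_last[of e c] unfolding alpha_def by simp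
qed


definition En :: "nat \<Rightarrow> 'a::comm_ring_1 \<Rightarrow> 'a \<Rightarrow> 'a" where
  "En n u v = (\<Sum>e\<in>I_gge n. u ^ nat (par_p e) * v ^ nat (par_q e))"

lemma finite_inv_seq: "finite (inv_seq n)"
proof -
  have "inv_seq n \<subseteq> {xs. set xs \<subseteq> {..n} \<and> length xs = n}"
    unfolding inv_seq_def by (auto simp: in_set_conv_nth) (meson dual_order.trans less_imp_le_nat)
  moreover have "finite {xs. set xs \<subseteq> {..n} \<and> length xs = (n::nat)}"
    by (rule finite_lists_length_eq) simp
  ultimately show ?thesis by (rule finite_subset)
qed

lemma finite_I: "finite (I_gge n)"
  unfolding I_gge_def using finite_inv_seq by simp

definition Cs :: "nat list \<Rightarrow> nat \<Rightarrow> nat set" where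
  "Cs e n = {c. beta e < int c \<and> c \<le> n}"

lemma I_gge_Suc:
  "I_gge (Suc n) = (\<lambda>(e,c). e@[c]) ` (SIGMA e:I_gge n. Cs e n)"
proof (rule set_eqI)
  fix x
  show "x \<in> I_gge (Suc n) \<longleftrightarrow> x \<in> (\<lambda>(e,c). e@[c]) ` (SIGMA e:I_gge n. Cs e n)"
  proof
    assume x: "x \<in> I_gge (Suc n)"
    then have len: "length x = Suc n" unfolding I_gge_def inv_seq_def by simp
    then have xne: "x \<noteq> []" by auto
    then have xe: "x = butlast x @ [last x]" by simp
    let ?e = "butlast x" and ?c = "last x"
    have le: "length ?e = n" using len by simp
    have b1: "\<forall>i<Suc n. x!i \<le> i" using x unfolding I_gge_def inv_seq_def by simp
    have "\<forall>i<n. ?e!i \<le> i"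
    proof (intro allI impI)
      fix i assume "i < n"
      then have "?e!i = x!i" using le by (simp add: nth_butlast)
      then show "?e!i \<le> i" using b1 \<open>i < n\<close> by simp
    qed
    moreover have "?c \<le> n"
    proof -
      have "?c = x!n" using xne len by (simp add: last_conv_nth)
      then show ?thesis using b1 by simp
    qed
    moreover have av: "avoids_ge_ge (?e@[?c])" using x xe unfolding I_gge_def by simp
    ultimately have "?e \<in> I_gge n" "?c \<in> Cs ?e n"
      unfolding I_gge_def inv_seq_def Cs_def using avoid_app[of ?e ?c] beta_lt[of ?e ?c] le by blast+
    then show "x \<in> (\<lambda>(e,c). e@[c]) ` (SIGMA e:I_gge n. Cs e n)"
      using xe by (auto intro!: image_eqI[where x="(?e,?c)"])
  next
    assume "x \<in> (\<lambda>(e,c). e@[c]) ` (SIGMA e:I_gge n. Cs e n)"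
    then obtain e c where x: "x = e@[c]" and e: "e \<in> I_gge n" and c: "c \<in> Cs e n" by auto
    have le: "length e = n" using e unfolding I_gge_def inv_seq_def by simp
    have "\<forall>i<Suc n. x!i \<le> i"
    proof (intro allI impI)
      fix i assume "i < Suc n"
      then show "x!i \<le> i" using e c x le unfolding I_gge_def inv_seq_def Cs_def
        by (cases "i < n") (auto simp: nth_append)
    qed
    moreover have "avoids_ge_ge x"
      using e c x le avoid_app[of e c] beta_lt[of e c] unfolding I_gge_def Cs_def by auto
    ultimately show "x \<in> I_gge (Suc n)" using x le unfolding I_gge_def inv_seq_def by auto
  qed
qed

lemma inj_app: "inj_on (\<lambda>(e,c). e@[c]) X"
  by (auto simp: inj_on_def)

lemma sum_I_Suc:
  "(\<Sum>x\<in>I_gge (Suc n). f x) = (\<Sum>e\<in>I_gge n. \<Sum>c\<in>Cs e n. f (e@[c]))"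
proof -
  have fC: "finite (Cs e n)" for e unfolding Cs_def by simp
  have "(\<Sum>x\<in>I_gge (Suc n). f x) = (\<Sum>p\<in>(SIGMA e:I_gge n. Cs e n). f ((\<lambda>(e,c). e@[c]) p))"
    unfolding I_gge_Suc by (rule sum.reindex[OF inj_app, unfolded comp_def])
  also have "\<dots> = (\<Sum>e\<in>I_gge n. \<Sum>c\<in>Cs e n. f (e@[c]))"
    using sum.Sigma[of "I_gge n" "\<lambda>e. Cs e n" "\<lambda>e c. f (e@[c])", symmetric] finite_I fC
    by (simp add: split_def)
  finally show ?thesis .
qed

lemma I_props:
  assumes "e \<in> I_gge n" "n \<ge> 1"
  shows "length e = n" "e \<noteq> []" "0 \<le> alpha e" "alpha e < int n" "beta e \<le> alpha e" "-1 \<le> beta e"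
proof -
  show l: "length e = n" using assms unfolding I_gge_def inv_seq_def by simp
  then show ne: "e \<noteq> []" using assms by auto
  show "0 \<le> alpha e" unfolding alpha_def by simp
  have b: "\<forall>i<n. e!i \<le> i" using assms unfolding I_gge_def inv_seq_def by simp
  have "\<forall>a\<in>set e. a < n" using b l by (auto simp: in_set_conv_nth) (meson le_less_trans)
  then show "alpha e < int n" unfolding alpha_def using ne by simp
  have "\<forall>x\<in>nonltr e. x \<le> alpha e"
    unfolding nonltr_def alpha_def using ne by auto
  moreover have "-1 \<le> alpha e" unfolding alpha_def by simp
  ultimately show "beta e \<le> alpha e" unfolding beta_nonltr using finite_nonltr[of e] by simp
  show "-1 \<le> beta e" by (rule beta_ge)
qed


lemma G1:
  fixes u :: "'a::comm_ring_1"
  shows "B \<le> Suc A \<Longrightarrow> (1-u) * (\<Sum>c\<in>{B..A}. u^(A-c)) = 1 - u^(Suc A - B)"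
proof (induction A)
  case 0
  then show ?case by (cases B) auto
next
  case (Suc A)
  show ?case
  proof (cases "B = Suc (Suc A)")
    case True then show ?thesis by simp
  next
    case False
    then have B: "B \<le> Suc A" using Suc.prems by simp
    have "(\<Sum>c\<in>{B..Suc A}. u^(Suc A-c)) = (\<Sum>c\<in>{B..A}. u^(Suc A-c)) + 1"
      using B by (simp add: sum.cl_ivl_Suc)
    also have "(\<Sum>c\<in>{B..A}. u^(Suc A-c)) = u * (\<Sum>c\<in>{B..A}. u^(A-c))"
      unfolding sum_distrib_left by (rule sum.cong) (auto simp: Suc_diff_le)
    finally have "(1-u) * (\<Sum>c\<in>{B..Suc A}. u^(Suc A-c)) = u * ((1-u) * (\<Sum>c\<in>{B..A}. u^(A-c))) + (1-u)"
      by (simp add: algebra_simps)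
    also have "\<dots> = u * (1 - u^(Suc A - B)) + (1-u)" using Suc.IH B by simp
    also have "\<dots> = 1 - u^(Suc (Suc A) - B)"
      using B by (simp add: Suc_diff_le algebra_simps)
    finally show ?thesis .
  qed
qed

lemma G2:
  fixes u v :: "'a::comm_ring_1"
  shows "A \<le> n \<Longrightarrow> B \<le> Suc A \<Longrightarrow> (u-v) * (\<Sum>c\<in>{Suc A..n}. u^(Suc c - B) * v^(Suc n - c))
     = u^(Suc (Suc n) - B) * v - u^(Suc (Suc A) - B) * v^(Suc n - A)"
proof (induction n rule: dec_induct)
  case base
  then show ?case by simp
next
  case (step n)
  have "(\<Sum>c\<in>{Suc A..Suc n}. u^(Suc c - B) * v^(Suc (Suc n) - c))
      = (\<Sum>c\<in>{Suc A..n}. u^(Suc c - B) * v^(Suc (Suc n) - c)) + u^(Suc (Suc n) - B) * v"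
    using step by (simp add: sum.cl_ivl_Suc)
  also have "(\<Sum>c\<in>{Suc A..n}. u^(Suc c - B) * v^(Suc (Suc n) - c)) = v * (\<Sum>c\<in>{Suc A..n}. u^(Suc c - B) * v^(Suc n - c))"
    unfolding sum_distrib_left
    by (rule sum.cong) (auto simp: Suc_diff_le)
  finally have "(u-v) * (\<Sum>c\<in>{Suc A..Suc n}. u^(Suc c - B) * v^(Suc (Suc n) - c))
     = v * ((u-v) * (\<Sum>c\<in>{Suc A..n}. u^(Suc c - B) * v^(Suc n - c))) + (u-v) * (u^(Suc (Suc n) - B) * v)"
    by (simp add: algebra_simps)
  also have "\<dots> = v * (u^(Suc (Suc n) - B) * v - u^(Suc (Suc A) - B) * v^(Suc n - A)) + (u-v) * (u^(Suc (Suc n) - B) * v)"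
    using step by simp
  also have "\<dots> = u^(Suc (Suc (Suc n)) - B) * v - u^(Suc (Suc A) - B) * v^(Suc (Suc n) - A)"
    using step by (simp add: Suc_diff_le algebra_simps)
  finally show ?case .
qed


lemma final_alg:
  fixes u v :: "'a::comm_ring_1"
  shows "(u-v) * (v * v^q) * (1 - u^p) + (1-u) * (u * u^(p+q) * v - u * u^p * (v * v^q))
       = v*(u-v)*(v^q - u^p*v^q) + u*v*(1-u)*(u^(p+q) - u^p*v^q)"
  by (simp add: algebra_simps)

lemma per_e:
  fixes u v :: "'a::comm_ring_1"
  assumes e: "e \<in> I_gge n" and n: "n \<ge> 1"
  shows "(1-u)*(u-v)*(\<Sum>c\<in>Cs e n. u^nat(par_p(e@[c])) * v^nat(par_q(e@[c])))
     = v*(u-v)*(v^nat(par_q e) - u^nat(par_p e)*v^nat(par_q e))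
       + u*v*(1-u)*(u^(nat(par_p e)+nat(par_q e)) - u^nat(par_p e)*v^nat(par_q e))"
proof -
  note P = I_props[OF e n]
  define A where "A = nat (alpha e)"
  define B where "B = nat (beta e + 1)"
  have aA: "alpha e = int A" using P(3) A_def by simp
  have bB: "beta e = int B - 1" using P(6) B_def by simp
  have BA: "B \<le> Suc A" using P(5) aA bB by simp
  have An: "A < n" using P(4) aA by simp
  have ln: "length e = n" by (rule P(1))
  have Cs_eq: "Cs e n = {B..A} \<union> {Suc A..n}" unfolding Cs_def using bB An BA by auto
  have disj: "{B..A} \<inter> {Suc A..n} = {}" by auto
  have low: "u^nat(par_p(e@[c])) * v^nat(par_q(e@[c])) = v^(Suc n - A) * u^(A-c)"
    if c: "c \<in> {B..A}" for c
  proof -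
    have cA: "c \<le> A" and Bc: "B \<le> c" using c by auto
    have nl: "\<not> ltr_max (e@[c]) (length e)" using ltr_last_alpha[OF P(2), of c] aA cA by simp
    have al: "alpha (e@[c]) = int A" using alpha_app[OF P(2), of c] aA cA by simp
    have "max (beta e) (int c) = int c" using bB Bc by simp
    then have be: "beta (e@[c]) = int c" using beta_app[of e c] nl by simp
    have "par_p (e@[c]) = int (A - c)" unfolding par_p_def al be using cA by (simp add: of_nat_diff)
    then have 1: "nat (par_p (e@[c])) = A - c" by simp
    have "par_q (e@[c]) = int (Suc n - A)" unfolding par_q_def al using ln An by (simp add: of_nat_diff)
    then have 2: "nat (par_q (e@[c])) = Suc n - A" by simp
    show ?thesis unfolding 1 2 by (simp add: mult.commute)
  qed
  have high: "u^nat(par_p(e@[c])) * v^nat(par_q(e@[c])) = u^(Suc c - B) * v^(Suc n - c)"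
    if c: "c \<in> {Suc A..n}" for c
  proof -
    have Ac: "A < c" and cn: "c \<le> n" using c by auto
    have nl: "ltr_max (e@[c]) (length e)" using ltr_last_alpha[OF P(2), of c] aA Ac by simp
    have al: "alpha (e@[c]) = int c" using alpha_app[OF P(2), of c] aA Ac by simp
    have be: "beta (e@[c]) = int B - 1" using beta_app[of e c] nl bB by simp
    have Bc: "B \<le> Suc c" using BA Ac by simp
    have "par_p (e@[c]) = int (Suc c - B)" unfolding par_p_def al be using Bc by (simp add: of_nat_diff)
    then have 1: "nat (par_p (e@[c])) = Suc c - B" by simp
    have "par_q (e@[c]) = int (Suc n - c)" unfolding par_q_def al using ln cn by (simp add: of_nat_diff)
    then have 2: "nat (par_q (e@[c])) = Suc n - c" by simp
    show ?thesis unfolding 1 2 by simp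
  qed
  have "(\<Sum>c\<in>Cs e n. u^nat(par_p(e@[c])) * v^nat(par_q(e@[c])))
      = (\<Sum>c\<in>{B..A}. u^nat(par_p(e@[c])) * v^nat(par_q(e@[c])))
        + (\<Sum>c\<in>{Suc A..n}. u^nat(par_p(e@[c])) * v^nat(par_q(e@[c])))"
    unfolding Cs_eq by (rule sum.union_disjoint) (auto simp: disj)
  also have "\<dots> = v^(Suc n - A) * (\<Sum>c\<in>{B..A}. u^(A-c)) + (\<Sum>c\<in>{Suc A..n}. u^(Suc c - B) * v^(Suc n - c))"
    by (simp add: low high sum_distrib_left)
  finally have S: "(\<Sum>c\<in>Cs e n. u^nat(par_p(e@[c])) * v^nat(par_q(e@[c])))
      = v^(Suc n - A) * (\<Sum>c\<in>{B..A}. u^(A-c)) + (\<Sum>c\<in>{Suc A..n}. u^(Suc c - B) * v^(Suc n - c))" .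
  define p where "p = Suc A - B"
  define q where "q = n - A"
  have pe: "nat (par_p e) = p" unfolding par_p_def p_def using aA bB BA by simp
  have qe: "nat (par_q e) = q" unfolding par_q_def q_def using aA ln An by simp
  have e1: "Suc n - A = Suc q" unfolding q_def using An by simp
  have e2: "Suc (Suc n) - B = Suc (p + q)" unfolding p_def q_def using An BA by simp
  have e3: "Suc (Suc A) - B = Suc p" unfolding p_def using BA by simp
  have g1: "(1-u) * (\<Sum>c\<in>{B..A}. u^(A-c)) = 1 - u^p" using G1[OF BA] p_def by simp
  have g2: "(u-v) * (\<Sum>c\<in>{Suc A..n}. u^(Suc c - B) * v^(Suc n - c)) = u^(Suc (p+q)) * v - u^(Suc p) * v^(Suc q)"
    using G2[of A n B u v] An BA e1 e2 e3 by simp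
  have "(1-u)*(u-v)*(v^(Suc n - A) * (\<Sum>c\<in>{B..A}. u^(A-c)) + (\<Sum>c\<in>{Suc A..n}. u^(Suc c - B) * v^(Suc n - c)))
     = (u-v)*v^(Suc q)*((1-u) * (\<Sum>c\<in>{B..A}. u^(A-c))) + (1-u)*((u-v) * (\<Sum>c\<in>{Suc A..n}. u^(Suc c - B) * v^(Suc n - c)))"
    unfolding e1 by (simp add: algebra_simps)
  also have "\<dots> = (u-v) * (v * v^q) * (1 - u^p) + (1-u) * (u * u^(p+q) * v - u * u^p * (v * v^q))"
    unfolding g1 g2 by simp
  also have "\<dots> = v*(u-v)*(v^q - u^p*v^q) + u*v*(1-u)*(u^(p+q) - u^p*v^q)"
    by (rule final_alg)
  finally show ?thesis unfolding S pe qe .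
qed

lemma En_rec:
  fixes u v :: "'a::comm_ring_1"
  assumes n: "n \<ge> 1"
  shows "(1-u)*(u-v)*En (Suc n) u v = v*(u-v)*(En n 1 v - En n u v) + u*v*(1-u)*(En n u u - En n u v)"
proof -
  have "(1-u)*(u-v)*En (Suc n) u v
     = (\<Sum>e\<in>I_gge n. (1-u)*(u-v)*(\<Sum>c\<in>Cs e n. u^nat(par_p(e@[c])) * v^nat(par_q(e@[c]))))"
    unfolding En_def sum_I_Suc by (simp add: sum_distrib_left)
  also have "\<dots> = (\<Sum>e\<in>I_gge n. v*(u-v)*(v^nat(par_q e) - u^nat(par_p e)*v^nat(par_q e))
       + u*v*(1-u)*(u^(nat(par_p e)+nat(par_q e)) - u^nat(par_p e)*v^nat(par_q e)))"
    by (intro sum.cong refl per_e n)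
  also have "\<dots> = v*(u-v)*(\<Sum>e\<in>I_gge n. v^nat(par_q e) - u^nat(par_p e)*v^nat(par_q e))
       + u*v*(1-u)*(\<Sum>e\<in>I_gge n. u^(nat(par_p e)+nat(par_q e)) - u^nat(par_p e)*v^nat(par_q e))"
    by (simp add: sum.distrib sum_distrib_left)
  also have "\<dots> = v*(u-v)*(En n 1 v - En n u v) + u*v*(1-u)*(En n u u - En n u v)"
    unfolding En_def by (simp add: sum_subtractf power_add)
  finally show ?thesis .
qed

lemma I_gge_1: "I_gge 1 = {[0]}"
proof -
  have "inv_seq 1 = {[0]}" unfolding inv_seq_def
    by (auto simp: length_Suc_conv)
  moreover have "avoids_ge_ge [0]" unfolding avoids_ge_ge_def by auto
  ultimately show ?thesis unfolding I_gge_def by auto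
qed

lemma En_1: "En 1 u v = u * v"
proof -
  have "alpha [0] = 0" unfolding alpha_def by simp
  moreover have "beta [0] = -1" unfolding beta_nonltr nonltr_def ltr_max_def by auto
  ultimately show ?thesis unfolding En_def I_gge_1 par_p_def par_q_def by simp
qed



definition coll :: "(nat \<Rightarrow> 'a::comm_ring_1 fps) \<Rightarrow> 'a fps" where
  "coll f = Abs_fps (\<lambda>k. \<Sum>n\<le>k. f n $ (k - n))"

lemma coll_nth: "coll f $ k = (\<Sum>n\<le>k. f n $ (k - n))"
  unfolding coll_def by simp

lemma coll_add: "coll (\<lambda>n. f n + g n) = coll f + coll g"
  by (rule fps_ext) (simp add: coll_nth sum.distrib)

lemma coll_diff: "coll (\<lambda>n. f n - g n) = coll f - coll g"
  by (rule fps_ext) (simp add: coll_nth sum_subtractf)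

lemma coll_shift: "coll f = f 0 + fps_X * coll (\<lambda>n. f (Suc n))"
proof (rule fps_ext)
  fix k show "coll f $ k = (f 0 + fps_X * coll (\<lambda>n. f (Suc n))) $ k"
  proof (cases k)
    case 0 then show ?thesis by (simp add: coll_nth)
  next
    case (Suc m)
    then show ?thesis by (simp add: coll_nth fps_X_mult_nth sum.atMost_Suc_shift del: sum.atMost_Suc)
  qed
qed

lemma swap_tri:
  "(\<Sum>n\<le>k. \<Sum>i\<le>k-n. (g::nat\<Rightarrow>nat\<Rightarrow>'a::comm_monoid_add) i n) = (\<Sum>i\<le>k. \<Sum>n\<le>k-i. g i n)"
proof -
  have "(\<Sum>n\<le>k. \<Sum>i\<le>k-n. g i n) = (\<Sum>n\<in>{..k}. \<Sum>i\<in>{i\<in>{..k}. n + i \<le> k}. g i n)"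
    by (rule sum.cong) (auto intro!: sum.cong)
  also have "\<dots> = (\<Sum>i\<in>{..k}. \<Sum>n\<in>{n\<in>{..k}. n + i \<le> k}. g i n)"
    by (rule sum.swap_restrict) auto
  also have "\<dots> = (\<Sum>i\<le>k. \<Sum>n\<le>k-i. g i n)"
    by (rule sum.cong) (auto intro!: sum.cong)
  finally show ?thesis .
qed

lemma coll_cmult: "coll (\<lambda>n. c * f n) = c * coll f"
proof (rule fps_ext)
  fix k
  have "coll (\<lambda>n. c * f n) $ k = (\<Sum>n\<le>k. \<Sum>i\<le>k-n. c$i * f n $ (k - n - i))"
    by (simp add: coll_nth fps_mult_nth atLeast0AtMost)
  also have "\<dots> = (\<Sum>i\<le>k. \<Sum>n\<le>k-i. c$i * f n $ (k - n - i))"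
    by (rule swap_tri)
  also have "\<dots> = (c * coll f) $ k"
    by (simp add: coll_nth fps_mult_nth atLeast0AtMost sum_distrib_left diff_commute add.commute)
  finally show "coll (\<lambda>n. c * f n) $ k = (c * coll f) $ k" .
qed

lemma kernel_eq:
  fixes u v :: "'a::comm_ring_1 fps"
  shows "coll (\<lambda>n. En (Suc n) u v) * ((1-u)*(u-v) + fps_X*v*(u-v) + fps_X*u*v*(1-u))
     = (1-u)*(u-v)*(u*v) + fps_X*v*(u-v)*coll (\<lambda>n. En (Suc n) 1 v) + fps_X*u*v*(1-u)*coll (\<lambda>n. En (Suc n) u u)"
proof -
  define A where "A = coll (\<lambda>n. En (Suc n) u v)"
  define B where "B = coll (\<lambda>n. En (Suc n) 1 v)"
  define C where "C = coll (\<lambda>n. En (Suc n) u u)"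
  have "(1-u)*(u-v) * A = coll (\<lambda>n. (1-u)*(u-v) * En (Suc n) u v)"
    unfolding A_def by (rule coll_cmult[symmetric])
  also have "\<dots> = (1-u)*(u-v)*(u*v) + fps_X * coll (\<lambda>n. (1-u)*(u-v) * En (Suc (Suc n)) u v)"
    by (subst coll_shift) (simp add: En_1[unfolded One_nat_def])
  also have "coll (\<lambda>n. (1-u)*(u-v) * En (Suc (Suc n)) u v)
      = coll (\<lambda>n. v*(u-v)*En (Suc n) 1 v - v*(u-v)*En (Suc n) u v + (u*v*(1-u)*En (Suc n) u u - u*v*(1-u)*En (Suc n) u v))"
    by (rule arg_cong[where f=coll], rule ext, subst En_rec) (simp_all add: algebra_simps)
  also have "\<dots> = v*(u-v)*B - v*(u-v)*A + (u*v*(1-u)*C - u*v*(1-u)*A)"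
    unfolding A_def B_def C_def by (simp add: coll_add coll_diff coll_cmult)
  finally have "(1-u)*(u-v) * A = (1-u)*(u-v)*(u*v) + fps_X * (v*(u-v)*B - v*(u-v)*A + (u*v*(1-u)*C - u*v*(1-u)*A))" .
  then show ?thesis unfolding A_def[symmetric] B_def[symmetric] C_def[symmetric]
    by (simp add: algebra_simps)
qed

definition Dser :: "'a::comm_ring_1 fps \<Rightarrow> 'a fps" where
  "Dser a = fps_X * coll (\<lambda>n. En (Suc n) (1+a) (1+a))"

lemma pair_eq:
  fixes a b :: "'a::field fps"
  assumes K: "a*b = fps_X*(1+a)*(1+b)*(a+b)" and a0: "1+a \<noteq> 0" and b0: "1+b \<noteq> 0"
  shows "a^2 * Dser a - b^2 * Dser b = a*b*(a-b)*(1+a+b)"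
proof -
  define v where "v = (1+a)*(1+b)"
  define B where "B = coll (\<lambda>n. En (Suc n) 1 v)"
  define C1 where "C1 = coll (\<lambda>n. En (Suc n) (1+a) (1+a))"
  define C2 where "C2 = coll (\<lambda>n. En (Suc n) (1+b) (1+b))"

  have q1: "(1-(1+a))*((1+a)-v) + fps_X*v*((1+a)-v) + fps_X*(1+a)*v*(1-(1+a)) = (1+a)*(a*b - fps_X*(1+a)*(1+b)*(a+b))"
    unfolding v_def by (simp add: algebra_simps)
  have q2: "(1-(1+b))*((1+b)-v) + fps_X*v*((1+b)-v) + fps_X*(1+b)*v*(1-(1+b)) = (1+b)*(a*b - fps_X*(1+a)*(1+b)*(a+b))"
    unfolding v_def by (simp add: algebra_simps)
  have r1: "(1-(1+a))*((1+a)-v)*((1+a)*v) + fps_X*v*((1+a)-v)*B + fps_X*(1+a)*v*(1-(1+a))*C1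
      = ((1+a)^2*(1+b)) * (a*b*(1+a) - fps_X*b*B - fps_X*a*C1)"
    unfolding v_def by (simp add: algebra_simps power2_eq_square)
  have r2: "(1-(1+b))*((1+b)-v)*((1+b)*v) + fps_X*v*((1+b)-v)*B + fps_X*(1+b)*v*(1-(1+b))*C2
      = ((1+b)^2*(1+a)) * (a*b*(1+b) - fps_X*a*B - fps_X*b*C2)"
    unfolding v_def by (simp add: algebra_simps power2_eq_square)
  have z: "a*b - fps_X*(1+a)*(1+b)*(a+b) = 0" using K by simp
  have k1: "coll (\<lambda>n. En (Suc n) (1+a) v) * ((1-(1+a))*((1+a)-v) + fps_X*v*((1+a)-v) + fps_X*(1+a)*v*(1-(1+a)))
     = (1-(1+a))*((1+a)-v)*((1+a)*v) + fps_X*v*((1+a)-v)*B + fps_X*(1+a)*v*(1-(1+a))*C1"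
    using kernel_eq[of "1+a" v] unfolding B_def C1_def .
  have "((1+a)^2*(1+b)) * (a*b*(1+a) - fps_X*b*B - fps_X*a*C1) = 0"
    using k1 unfolding q1 z r1 by simp
  then have e1: "a*b*(1+a) - fps_X*b*B - fps_X*a*C1 = 0" using a0 b0 by simp
  have k2: "coll (\<lambda>n. En (Suc n) (1+b) v) * ((1-(1+b))*((1+b)-v) + fps_X*v*((1+b)-v) + fps_X*(1+b)*v*(1-(1+b)))
     = (1-(1+b))*((1+b)-v)*((1+b)*v) + fps_X*v*((1+b)-v)*B + fps_X*(1+b)*v*(1-(1+b))*C2"
    using kernel_eq[of "1+b" v] unfolding B_def C2_def .
  have "((1+b)^2*(1+a)) * (a*b*(1+b) - fps_X*a*B - fps_X*b*C2) = 0"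
    using k2 unfolding q2 z r2 by simp
  then have e2: "a*b*(1+b) - fps_X*a*B - fps_X*b*C2 = 0" using a0 b0 by simp
  have "a^2 * Dser a - b^2 * Dser b = a*b*(a-b)*(1+a+b) - (a * (a*b*(1+a) - fps_X*b*B - fps_X*a*C1) - b * (a*b*(1+b) - fps_X*a*B - fps_X*b*C2))"
    unfolding Dser_def C1_def[symmetric] C2_def[symmetric] by (simp add: algebra_simps power2_eq_square)
  then show ?thesis using e1 e2 by simp
qed



abbreviation xc :: ser where "xc \<equiv> fps_const xx"
abbreviation cb :: ser where "cb \<equiv> fps_const xb"

lemma xx_xb: "xx * xb = 1"
  by (simp add: fls_X_conv_shift_1 fls_X_inv_conv_shift_1 fls_shifted_times_simps)

lemma xc_cb: "xc * cb = 1"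
  by (simp add: xx_xb)

lemma one_xx_ne: "1 + xx \<noteq> 0"
proof
  assume "1 + xx = 0"
  then have "fls_nth (1 + xx) 1 = 0" by simp
  then show False by simp
qed

lemma one_xb_ne: "1 + xb \<noteq> 0"
proof
  assume "1 + xb = 0"
  then have "fls_nth (1 + xb) (-1) = 0" by simp
  then show False by simp
qed

section \<open>Existence and uniqueness of Y\<close>

definition phi :: ser where
  "phi = fps_const (1 + xb) * (1 + fps_X) * (xc + fps_X)"

lemma phi0: "phi $ 0 = 1 + xx"
  unfolding phi_def by (simp add: fps_mult_nth algebra_simps xx_xb)

definition Y0 :: ser where "Y0 = fps_inv (fps_X * inverse phi)"

lemma Y0_eq: "Y0 = fps_X * fps_const (1 + xb) * (1 + Y0) * (xc + Y0)"
proof -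
  define w where "w = fps_X * inverse phi"
  have p0: "phi $ 0 \<noteq> 0" using phi0 one_xx_ne by simp
  have w0: "w $ 0 = 0" unfolding w_def by simp
  have w1: "w $ 1 \<noteq> 0" unfolding w_def using p0 by (simp add: fps_X_mult_nth)
  have Y00: "Y0 $ 0 = 0" unfolding Y0_def by (simp add: fps_inv_def)
  have "w oo Y0 = fps_X" unfolding Y0_def w_def[symmetric] by (rule fps_inv_right[OF w0 w1])
  moreover have "w oo Y0 = Y0 * inverse (phi oo Y0)"
    unfolding w_def using Y00 p0
    by (simp add: fps_compose_mult_distrib fps_inverse_compose)
  moreover have pY: "phi oo Y0 = fps_const (1 + xb) * (1 + Y0) * (xc + Y0)"
    unfolding phi_def using Y00
    by (simp add: fps_compose_mult_distrib fps_compose_add_distrib)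
  ultimately have e: "Y0 * inverse (phi oo Y0) = fps_X" by simp
  have "(phi oo Y0) $ 0 \<noteq> 0" using p0 by simp
  then have "inverse (phi oo Y0) * (phi oo Y0) = 1" by (rule inverse_mult_eq_1)
  then have "Y0 = Y0 * inverse (phi oo Y0) * (phi oo Y0)" by (simp add: mult.assoc)
  also have "\<dots> = fps_X * (phi oo Y0)" using e by simp
  finally show ?thesis unfolding pY by (simp add: mult.assoc)
qed

lemma Ysol_0: "Y = fps_X * fps_const (1 + xb) * (1 + Y) * (xc + Y) \<Longrightarrow> Y $ 0 = 0"
  by (metis fps_X_mult_nth mult.assoc)

lemma Ysol_unique:
  assumes Y1: "Y1 = fps_X * fps_const (1 + xb) * (1 + Y1) * (xc + Y1)"
    and Y2: "Y2 = fps_X * fps_const (1 + xb) * (1 + Y2) * (xc + Y2)"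
  shows "Y1 = Y2"
proof (rule ccontr)
  assume ne: "Y1 \<noteq> Y2"
  define d where "d = Y1 - Y2"
  define g where "g = fps_const (1 + xb) * (1 + xc + Y1 + Y2)"
  have dne: "d \<noteq> 0" using ne d_def by simp
  have "d = fps_X * g * d"
  proof -
    have "d = fps_X * fps_const (1 + xb) * ((1 + Y1) * (xc + Y1) - (1 + Y2) * (xc + Y2))"
      unfolding d_def by (subst Y1, subst Y2) (simp add: algebra_simps)
    also have "\<dots> = fps_X * g * d" unfolding g_def d_def by (simp add: algebra_simps)
    finally show ?thesis .
  qed
  moreover have "g \<noteq> 0"
  proof -
    have "g $ 0 = (1 + xb) * (1 + xx)" unfolding g_def using Ysol_0[OF Y1] Ysol_0[OF Y2] by simp
    then have "g $ 0 \<noteq> 0" using one_xb_ne one_xx_ne by simp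
    then show ?thesis by auto
  qed
  ultimately have "subdegree d = 1 + subdegree g + subdegree d"
    using dne by (metis subdegree_mult subdegree_fps_X mult_eq_0_iff fps_nonzero_nth_minimal)
  then show False by simp
qed

lemma Yser_eq: "Yser = Y0"
  unfolding Yser_def
proof (rule the_equality)
  show "Y0 = fps_X * fps_const (1 + xb) * (1 + Y0) * (fps_const xx + Y0)" by (rule Y0_eq)
next
  fix Y assume "Y = fps_X * fps_const (1 + xb) * (1 + Y) * (fps_const xx + Y)"
  then show "Y = Y0" by (rule Ysol_unique[OF _ Y0_eq])
qed

lemma fc1: "fps_const (1 + xb) = 1 + cb"
  by (metis fps_const_1_eq_1 fps_const_add)

lemma Y_eq: "Yser = fps_X * (1 + cb) * (1 + Yser) * (xc + Yser)"
  using Y0_eq unfolding Yser_eq fc1 .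

lemma Y_0: "Yser $ 0 = 0"
  using Ysol_0[OF Y0_eq] unfolding Yser_eq .

section \<open>The orbit\<close>

abbreviation Y where "Y \<equiv> Yser"

lemma K1: "xc*Y = fps_X*(1+xc)*(1+Y)*(xc+Y)"
  using Y_eq xc_cb by algebra

lemma K2: "Y*(Y*cb) = fps_X*(1+Y)*(1+Y*cb)*(Y+Y*cb)"
  using Y_eq xc_cb by algebra

lemma K3: "(Y*cb)*cb = fps_X*(1+Y*cb)*(1+cb)*(Y*cb+cb)"
  using Y_eq xc_cb by algebra

lemma nz1: "1 + xc \<noteq> 0"
proof -
  have "(1 + xc) $ 0 = 1 + xx" by simp
  then show ?thesis using one_xx_ne by auto
qed

lemma nz_of: "f $ 0 \<noteq> 0 \<Longrightarrow> f \<noteq> 0"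
  by auto

lemma nz2: "1 + Y \<noteq> 0"
  by (rule nz_of) (simp add: Y_0)

lemma nz3: "1 + Y*cb \<noteq> 0"
  by (rule nz_of) (simp add: Y_0 fps_mult_nth)

lemma nz4: "1 + cb \<noteq> 0"
proof -
  have "(1 + cb) $ 0 = 1 + xb" by simp
  then show ?thesis using one_xb_ne by auto
qed

definition Sser :: ser where
  "Sser = xc*Y*(xc-Y)*(1+xc+Y) + Y*(Y*cb)*(Y-Y*cb)*(1+Y+Y*cb) + (Y*cb)*cb*(Y*cb-cb)*(1+Y*cb+cb)"

lemma orbit: "xc^2 * Dser xc - cb^2 * Dser cb = Sser"
proof -
  have 1: "xc^2 * Dser xc - Y^2 * Dser Y = xc*Y*(xc-Y)*(1+xc+Y)" by (rule pair_eq[OF K1 nz1 nz2])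
  have 2: "Y^2 * Dser Y - (Y*cb)^2 * Dser (Y*cb) = Y*(Y*cb)*(Y-Y*cb)*(1+Y+Y*cb)" by (rule pair_eq[OF K2 nz2 nz3])
  have 3: "(Y*cb)^2 * Dser (Y*cb) - cb^2 * Dser cb = (Y*cb)*cb*(Y*cb-cb)*(1+Y*cb+cb)" by (rule pair_eq[OF K3 nz3 nz4])
  have "xc^2 * Dser xc - cb^2 * Dser cb = (xc^2 * Dser xc - Y^2 * Dser Y) + (Y^2 * Dser Y - (Y*cb)^2 * Dser (Y*cb))
     + ((Y*cb)^2 * Dser (Y*cb) - cb^2 * Dser cb)" by algebra
  also have "\<dots> = Sser" unfolding 1 2 3 Sser_def ..
  finally show ?thesis .
qed

lemma Rser_poly: "Rser Y = Y*(xc+1-cb^5-cb^6) + Y^2*(cb^5-cb) + Y^3*(cb^3+cb^6-cb-cb^4) + Y^4*(cb^3-cb^5)"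
proof -
  have a: "fps_const (xx + 1 - xb^5 - xb^6) = xc+1-cb^5-cb^6" by (rule fps_ext) (simp add: fps_const_power)
  have b: "fps_const (xb^5 - xb) = cb^5-cb" by (rule fps_ext) (simp add: fps_const_power)
  have c: "fps_const (xb^3 + xb^6 - xb - xb^4) = cb^3+cb^6-cb-cb^4" by (rule fps_ext) (simp add: fps_const_power)
  have d: "fps_const (xb^3 - xb^5) = cb^3-cb^5" by (rule fps_ext) (simp add: fps_const_power)
  show ?thesis unfolding Rser_def a b c d ..
qed

lemma R_S: "Rser Y = cb^2 * Sser"
  unfolding Rser_poly Sser_def using xc_cb by algebra

lemma R_D: "Rser Y = Dser xc - cb^4 * Dser cb"
proof -
  have "Rser Y = cb^2 * (xc^2 * Dser xc - cb^2 * Dser cb)" unfolding R_S orbit ..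
  also have "\<dots> = (xc*cb)^2 * Dser xc - cb^4 * Dser cb" by (simp add: algebra_simps power2_eq_square power4_eq_xxxx)
  finally show ?thesis using xc_cb by simp
qed



lemma fps_const_one_plus: "1 + fps_const (a::'a::comm_ring_1) = fps_const (1 + a)"
  by (rule fps_ext) simp

lemma fps_const_sum: "fps_const (sum f A :: 'a::comm_ring_1) = (\<Sum>x\<in>A. fps_const (f x))"
proof (induction A rule: infinite_finite_induct)
  case (insert x F)
  then show ?case by (simp add: fps_const_add[symmetric] del: fps_const_add)
qed simp_all

lemma En_const: "En n (fps_const u) (fps_const v) = fps_const (En n u v)"
  by (simp only: En_def fps_const_sum fps_const_power fps_const_mult)

lemma coll_const: "coll (\<lambda>m. fps_const (g m)) $ k = g k"
proof -
  have "coll (\<lambda>m. fps_const (g m)) $ k = (\<Sum>n\<le>k. if n = k then g n else 0)"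
    unfolding coll_nth by (rule sum.cong) auto
  then show ?thesis by simp
qed
lemma Dser_const: "Dser (fps_const a) $ n = (if n = 0 then 0 else En n (1+a) (1+a))"
  unfolding Dser_def fps_const_one_plus En_const
  by (simp add: fps_X_mult_nth coll_const)

lemma fps_to_fls_sum: "fps_to_fls (sum f A) = (\<Sum>x\<in>A. fps_to_fls (f x))"
  by (induction A rule: infinite_finite_induct) auto

lemma En_fls: "fps_to_fls (En n u v) = En n (fps_to_fls u) (fps_to_fls v)"
  by (simp add: En_def fps_to_fls_sum fls_times_fps_to_fls fps_to_fls_power)

lemma binom_vanish: "j > k \<Longrightarrow> ((1 + fps_X :: 'a::comm_ring_1 fps) ^ k) $ j = 0"
proof (induction k arbitrary: j)
  case 0 then show ?case by simp
next
  case (Suc k)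
  have eq: "(1 + fps_X :: 'a fps) ^ Suc k = (1 + fps_X) ^ k + fps_X * (1 + fps_X) ^ k"
    by (simp only: power_Suc distrib_right mult_1_left)
  show ?case unfolding eq using Suc.IH Suc.prems by (simp add: fps_X_mult_nth)
qed

lemma one_xb: "1 + xb = xb * fps_to_fls (1 + fps_X)"
proof -
  have "xb * fps_to_fls (1 + fps_X) = xb * (1 + xx)" by (simp only: fps_to_fls_plus fps_one_to_fls fps_X_to_fls)
  also have "\<dots> = xb + xb * xx" by (simp only: distrib_left mult_1_right)
  also have "xb * xx = 1" using xx_xb by (simp only: mult.commute)
  finally show ?thesis by (simp only: add.commute)
qed

lemma vanish_pow: "i \<ge> 0 \<Longrightarrow> fls_nth (xb^4 * (1 + xb)^k) i = 0"
proof -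
  assume i: "i \<ge> 0"
  have "(1 + xb)^k = xb^k * fps_to_fls ((1 + fps_X)^k)"
    unfolding one_xb by (simp only: power_mult_distrib fps_to_fls_power)
  then have "xb^4 * (1 + xb)^k = xb^(k+4) * fps_to_fls ((1 + fps_X)^k)"
    by (simp only: power_add) (simp only: mult_ac)
  also have "\<dots> = fls_shift (int (k+4)) (fps_to_fls ((1 + fps_X)^k))"
    by (rule fls_X_inv_power_times_conv_shift(1))
  finally have "fls_nth (xb^4 * (1 + xb)^k) i = fls_nth (fps_to_fls ((1 + fps_X :: rat fps)^k)) (i + int (k+4))"
    by (simp only: fls_shift_nth)
  also have "\<dots> = ((1 + fps_X :: rat fps)^k) $ nat (i + int (k+4))"
    using i by (simp only: fps_to_fls_nth) simp
  also have "\<dots> = 0" using i by (intro binom_vanish) linarith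
  finally show ?thesis .
qed

lemma vanish_En: "i \<ge> 0 \<Longrightarrow> fls_nth (xb^4 * En n (1 + xb) (1 + xb)) i = 0"
  unfolding En_def sum_distrib_left fls_nth_sum
  by (simp add: vanish_pow power_add[symmetric])

lemma regpart0: "(\<And>i. i \<ge> 0 \<Longrightarrow> fls_nth f i = 0) \<Longrightarrow> fls_regpart f = 0"
  by (rule fps_ext) simp

theorem theorem3p1:
  shows "E_gf (1 + fps_X) (1 + fps_X :: rat fps) = PT_x (Rser Yser)"
proof (rule fps_ext)
  fix n
  have "PT_x (Rser Yser) $ n = fls_regpart (Dser xc $ n - xb^4 * Dser cb $ n)"
    unfolding PT_x_def R_D by (simp add: fps_const_power)
  also have "\<dots> = fls_regpart (Dser xc $ n) - fls_regpart (xb^4 * Dser cb $ n)"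
    by simp
  also have "fls_regpart (xb^4 * Dser cb $ n) = 0"
    unfolding Dser_const by (auto intro!: regpart0 vanish_En)
  also have "fls_regpart (Dser xc $ n) = (if n = 0 then 0 else En n (1 + fps_X) (1 + fps_X :: rat fps))"
  proof -
    have "En n (1 + xx) (1 + xx) = fps_to_fls (En n (1 + fps_X) (1 + fps_X :: rat fps))"
      by (simp add: En_fls fps_X_to_fls)
    then show ?thesis unfolding Dser_const by simp
  qed
  finally show "E_gf (1 + fps_X) (1 + fps_X :: rat fps) $ n = PT_x (Rser Yser) $ n"
    unfolding E_gf_def En_def by simp
qed


end
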